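(* Let $G=(V,E)$ be an undirected hypergraph in which every node has finite degree. Then $\mathsf{Hall}(G)$ equals the supremum of all $\alpha$ for which $G$ is $\alpha$-orientable, where orientations are allowed to be randomized (fractional).
   Context: For $U\subseteq V$, $E[U]\subseteq E$ is the set of edges with at least one incident node in $U$. The Hall density is $\mathsf{Hall}(G)=\inf\{|E[U]|/|U|: U\subseteq V,\ 0<|U|<\infty\}$. An orientation is a map $f:E\to V$ with $f(e)$ incident to $e$; a randomized (fractional) orientation assigns to each edge a probability distribution over its incident nodes, and the indegree of $v$ is the total (expected) amount of edges assigned to $v$. $G$ is $\alpha$-orientable if some (randomized) orientation gives every node indegree at least $\alpha$. *)

theory Defs
  imports "HOL-Probability.Probability_Mass_Function" "HOL-Library.Extended_Real"
begin

text \<open>A hypergraph is given by a node set V, an edge index set E and an incidence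
  map inc assigning to each edge its (nonempty) set of incident nodes.
  Parallel edges are allowed.\<close>

definition hypergraph :: "'v set \<Rightarrow> 'e set \<Rightarrow> ('e \<Rightarrow> 'v set) \<Rightarrow> bool" where
  "hypergraph V E inc \<longleftrightarrow> (\<forall>e\<in>E. inc e \<subseteq> V \<and> inc e \<noteq> {})"

definition finite_degrees :: "'v set \<Rightarrow> 'e set \<Rightarrow> ('e \<Rightarrow> 'v set) \<Rightarrow> bool" where
  "finite_degrees V E inc \<longleftrightarrow> (\<forall>v\<in>V. finite {e\<in>E. v \<in> inc e})"

definition edges_touching :: "'e set \<Rightarrow> ('e \<Rightarrow> 'v set) \<Rightarrow> 'v set \<Rightarrow> 'e set" where
  "edges_touching E inc U = {e\<in>E. inc e \<inter> U \<noteq> {}}"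

definition hall_density :: "'v set \<Rightarrow> 'e set \<Rightarrow> ('e \<Rightarrow> 'v set) \<Rightarrow> ereal" where
  "hall_density V E inc =
     (INF U \<in> {U. U \<subseteq> V \<and> finite U \<and> U \<noteq> {}}.
        ereal (real (card (edges_touching E inc U)) / real (card U)))"

definition frac_orientation :: "'e set \<Rightarrow> ('e \<Rightarrow> 'v set) \<Rightarrow> ('e \<Rightarrow> 'v pmf) \<Rightarrow> bool" where
  "frac_orientation E inc p \<longleftrightarrow> (\<forall>e\<in>E. set_pmf (p e) \<subseteq> inc e)"

definition indegree :: "'e set \<Rightarrow> ('e \<Rightarrow> 'v set) \<Rightarrow> ('e \<Rightarrow> 'v pmf) \<Rightarrow> 'v \<Rightarrow> real" where
  "indegree E inc p v = (\<Sum>e\<in>{e\<in>E. v \<in> inc e}. pmf (p e) v)"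

definition orientable :: "'v set \<Rightarrow> 'e set \<Rightarrow> ('e \<Rightarrow> 'v set) \<Rightarrow> real \<Rightarrow> bool" where
  "orientable V E inc \<alpha> \<longleftrightarrow>
     (\<exists>p. frac_orientation E inc p \<and> (\<forall>v\<in>V. indegree E inc p v \<ge> \<alpha>))"

end

theory Submission
  imports Defs
begin

definition hallc :: "'a set \<Rightarrow> ('a \<Rightarrow> 'b set) \<Rightarrow> bool" where
  "hallc L B \<longleftrightarrow> (\<forall>S. S \<subseteq> L \<longrightarrow> finite S \<longrightarrow> card S \<le> card (\<Union>(B ` S)))"

lemma hall_inf:
  fixes A :: "'a \<Rightarrow> 'b set"
  assumes fin: "\<forall>v\<in>L. finite (A v)"
  and hall: "hallc L A"
  shows "\<exists>f. inj_on f L \<and> (\<forall>v\<in>L. f v \<in> A v)"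
proof -
  define Bf where "Bf D v = {x\<in>A v. (v,x) \<notin> D}" for D v
  define \<D> where "\<D> = {D. D \<subseteq> Sigma L A \<and> hallc L (Bf D)}"
  have "\<forall>C\<in>chains \<D>. \<Union>C \<in> \<D>"
  proof
    fix C assume C: "C \<in> chains \<D>"
    show "\<Union>C \<in> \<D>"
    proof (cases "C = {}")
      case True
      have "Bf {} = A" unfolding Bf_def by auto
      then show ?thesis using True hall unfolding \<D>_def by auto
    next
      case False
      have sub: "\<Union>C \<subseteq> Sigma L A" using C unfolding chains_def \<D>_def by auto
      moreover have "hallc L (Bf (\<Union>C))" unfolding hallc_def
      proof (intro allI impI)
        fix S assume S: "S \<subseteq> L" "finite S"
        have P: "finite (Sigma S A)" using S fin by auto
        have "\<Union>C \<inter> Sigma S A \<subseteq> \<Union>C" by auto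
        then obtain D0 where D0: "D0 \<in> C" "\<Union>C \<inter> Sigma S A \<subseteq> D0"
          using finite_subset_Union_chain[of "\<Union>C \<inter> Sigma S A" C \<D>] P False C
          unfolding chains_alt_def by auto
        have "\<forall>v\<in>S. Bf (\<Union>C) v = Bf D0 v" using D0 unfolding Bf_def by auto
        then have eq: "\<Union>(Bf (\<Union>C) ` S) = \<Union>(Bf D0 ` S)" by auto
        have "hallc L (Bf D0)" using D0 C unfolding chains_def \<D>_def by auto
        then show "card S \<le> card (\<Union>(Bf (\<Union>C) ` S))" using S eq unfolding hallc_def by auto
      qed
      ultimately show ?thesis unfolding \<D>_def by auto
    qed
  qed
  from Zorn_Lemma[OF this] obtain M where M: "M \<in> \<D>" and Mmax: "\<forall>X\<in>\<D>. M \<subseteq> X \<longrightarrow> X = M"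
    by blast
  have hM: "hallc L (Bf M)" and MS: "M \<subseteq> Sigma L A" using M unfolding \<D>_def by auto
  have hM': "card S \<le> card (\<Union>(Bf M ` S))" if "S \<subseteq> L" "finite S" for S
    using hM that unfolding hallc_def by blast
  have finB: "finite (Bf M v)" if "v \<in> L" for v using fin that unfolding Bf_def by auto
  have finN: "finite (\<Union>(Bf M ` T))" if "finite T" "T \<subseteq> L" for T
    using that finB by auto
  have ne: "Bf M v \<noteq> {}" if "v \<in> L" for v
  proof
    assume e: "Bf M v = {}"
    have "card {v} \<le> card (\<Union>(Bf M ` {v}))" using hM that unfolding hallc_def by blast
    then show False using e by simp
  qed
  have viol: "\<exists>T. T \<subseteq> L - {v} \<and> finite T \<and> card (\<Union>(Bf M ` T) \<union> (Bf M v - {x})) \<le> card T"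
    if v: "v \<in> L" and x: "x \<in> Bf M v" for v x
  proof -
    let ?M1 = "insert (v,x) M"
    have "?M1 \<subseteq> Sigma L A" using MS v x unfolding Bf_def by auto
    moreover have "?M1 \<noteq> M" using x unfolding Bf_def by auto
    ultimately have "\<not> hallc L (Bf ?M1)"
    proof (intro notI)
      assume h: "hallc L (Bf ?M1)" and s: "?M1 \<subseteq> Sigma L A" and n: "?M1 \<noteq> M"
      have "?M1 \<in> \<D>" using h s unfolding \<D>_def by blast
      moreover have "M \<subseteq> ?M1" by blast
      ultimately have "?M1 = M" using Mmax by blast
      then show False using n by blast
    qed
    then obtain S where S: "S \<subseteq> L" "finite S" "card (\<Union>(Bf ?M1 ` S)) < card S"
      unfolding hallc_def by (meson not_le)
    have Bf1: "Bf ?M1 w = (if w = v then Bf M v - {x} else Bf M w)" for w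
      unfolding Bf_def by auto
    have vS: "v \<in> S"
    proof (rule ccontr)
      assume "v \<notin> S"
      then have "\<Union>(Bf ?M1 ` S) = \<Union>(Bf M ` S)" using Bf1 by auto
      moreover have "card S \<le> card (\<Union>(Bf M ` S))" using S(1,2) hM unfolding hallc_def by blast
      ultimately show False using S(3) by simp
    qed
    define T where "T = S - {v}"
    have SvT: "S = insert v T" using vS unfolding T_def by blast
    have vT: "v \<notin> T" unfolding T_def by blast
    have "\<Union>(Bf ?M1 ` T) = \<Union>(Bf M ` T)"
      by (rule SUP_cong) (use vT Bf1 in auto)
    then have "\<Union>(Bf ?M1 ` S) = \<Union>(Bf M ` T) \<union> (Bf M v - {x})"
      unfolding SvT using Bf1[of v] by (simp add: Un_commute)
    moreover have "card S = card T + 1" using SvT vT S(2) by simp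
    ultimately have "card (\<Union>(Bf M ` T) \<union> (Bf M v - {x})) \<le> card T" using S(3) by simp
    moreover have "T \<subseteq> L - {v}" "finite T" using S(1,2) unfolding T_def by auto
    ultimately show ?thesis by blast
  qed
  have uniq: "x1 = x2" if v: "v \<in> L" and x1: "x1 \<in> Bf M v" and x2: "x2 \<in> Bf M v" for v x1 x2
  proof (rule ccontr)
    assume neq: "x1 \<noteq> x2"
    obtain T1 where T1: "T1 \<subseteq> L - {v}" "finite T1"
      "card (\<Union>(Bf M ` T1) \<union> (Bf M v - {x1})) \<le> card T1" using viol[OF v x1] by auto
    obtain T2 where T2: "T2 \<subseteq> L - {v}" "finite T2"
      "card (\<Union>(Bf M ` T2) \<union> (Bf M v - {x2})) \<le> card T2" using viol[OF v x2] by auto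
    define X1 where "X1 = \<Union>(Bf M ` T1) \<union> (Bf M v - {x1})"
    define X2 where "X2 = \<Union>(Bf M ` T2) \<union> (Bf M v - {x2})"
    have fX1: "finite X1" unfolding X1_def using finN[of T1] T1 finB[OF v] by auto
    have fX2: "finite X2" unfolding X2_def using finN[of T2] T2 finB[OF v] by auto
    have "\<Union>(Bf M ` (insert v (T1 \<union> T2))) \<subseteq> X1 \<union> X2"
      unfolding X1_def X2_def using neq by auto
    then have c1: "card (\<Union>(Bf M ` (insert v (T1 \<union> T2)))) \<le> card (X1 \<union> X2)"
      using fX1 fX2 by (simp add: card_mono)
    have "card (insert v (T1 \<union> T2)) \<le> card (\<Union>(Bf M ` (insert v (T1 \<union> T2))))"
      by (rule hM') (use T1 T2 v in auto)
    moreover have "v \<notin> T1 \<union> T2" using T1(1) T2(1) by blast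
    then have "card (insert v (T1 \<union> T2)) = card (T1 \<union> T2) + 1"
      using T1(2) T2(2) by simp
    ultimately have a: "card (T1 \<union> T2) + 1 \<le> card (X1 \<union> X2)" using c1 by linarith
    have "\<Union>(Bf M ` (T1 \<inter> T2)) \<subseteq> X1 \<inter> X2" unfolding X1_def X2_def by auto
    then have "card (\<Union>(Bf M ` (T1 \<inter> T2))) \<le> card (X1 \<inter> X2)" using fX1 by (simp add: card_mono)
    moreover have "card (T1 \<inter> T2) \<le> card (\<Union>(Bf M ` (T1 \<inter> T2)))"
      by (rule hM') (use T1 T2 in auto)
    ultimately have b: "card (T1 \<inter> T2) \<le> card (X1 \<inter> X2)" by linarith
    have "card X1 + card X2 = card (X1 \<union> X2) + card (X1 \<inter> X2)" using card_Un_Int fX1 fX2 by blast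
    moreover have "card T1 + card T2 = card (T1 \<union> T2) + card (T1 \<inter> T2)" using card_Un_Int T1 T2 by blast
    ultimately show False using a b T1(3) T2(3) unfolding X1_def X2_def by linarith
  qed
  define f where "f v = (SOME x. x \<in> Bf M v)" for v
  have fB: "f v \<in> Bf M v" if "v \<in> L" for v
    using ne[OF that] unfolding f_def by (simp add: some_in_eq)
  have "inj_on f L"
  proof (rule inj_onI)
    fix v w assume vw: "v \<in> L" "w \<in> L" "f v = f w"
    show "v = w"
    proof (rule ccontr)
      assume "v \<noteq> w"
      have "card {v,w} \<le> card (\<Union>(Bf M ` {v,w}))" by (rule hM') (use vw in auto)
      moreover have "\<Union>(Bf M ` {v,w}) = {f v}"
        using uniq fB vw by auto
      ultimately show False using \<open>v \<noteq> w\<close> by auto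
    qed
  qed
  moreover have "\<forall>v\<in>L. f v \<in> A v" using fB unfolding Bf_def by auto
  ultimately show ?thesis by blast
qed



lemma finite_EU:
  assumes fd: "finite_degrees V E inc" and U: "U \<subseteq> V" "finite U"
  shows "finite (edges_touching E inc U)"
proof -
  have "edges_touching E inc U \<subseteq> (\<Union>v\<in>U. {e\<in>E. v \<in> inc e})"
    unfolding edges_touching_def by blast
  moreover have "finite (\<Union>v\<in>U. {e\<in>E. v \<in> inc e})"
    using fd U unfolding finite_degrees_def by blast
  ultimately show ?thesis by (rule finite_subset)
qed

lemma easy_dir:
  assumes fd: "finite_degrees V E inc" and o: "orientable V E inc \<alpha>"
  shows "ereal \<alpha> \<le> hall_density V E inc"
  unfolding hall_density_def
proof (rule INF_greatest)
  fix U assume "U \<in> {U. U \<subseteq> V \<and> finite U \<and> U \<noteq> {}}"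
  then have U: "U \<subseteq> V" "finite U" "U \<noteq> {}" by auto
  obtain p where p: "\<forall>v\<in>V. indegree E inc p v \<ge> \<alpha>" using o unfolding orientable_def by blast
  define EU where "EU = edges_touching E inc U"
  have fEU: "finite EU" unfolding EU_def using finite_EU[OF fd U(1,2)] .
  have "\<alpha> * card U = (\<Sum>v\<in>U. \<alpha>)" by simp
  also have "\<dots> \<le> (\<Sum>v\<in>U. indegree E inc p v)" by (rule sum_mono) (use p U in auto)
  also have "\<dots> = (\<Sum>v\<in>U. \<Sum>e\<in>EU. if v \<in> inc e then pmf (p e) v else 0)"
  proof (rule sum.cong[OF refl])
    fix v assume v: "v \<in> U"
    have "(\<Sum>e\<in>EU. if v \<in> inc e then pmf (p e) v else 0) = (\<Sum>e\<in>{e\<in>EU. v \<in> inc e}. pmf (p e) v)"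
      using fEU by (simp add: sum.inter_filter)
    also have "{e\<in>EU. v \<in> inc e} = {e\<in>E. v \<in> inc e}" using v unfolding EU_def edges_touching_def by blast
    finally show "indegree E inc p v = (\<Sum>e\<in>EU. if v \<in> inc e then pmf (p e) v else 0)"
      unfolding indegree_def by simp
  qed
  also have "\<dots> = (\<Sum>e\<in>EU. \<Sum>v\<in>U. if v \<in> inc e then pmf (p e) v else 0)" by (rule sum.swap)
  also have "\<dots> \<le> (\<Sum>e\<in>EU. 1)"
  proof (rule sum_mono)
    fix e assume "e \<in> EU"
    have "(\<Sum>v\<in>U. if v \<in> inc e then pmf (p e) v else 0) \<le> (\<Sum>v\<in>U. pmf (p e) v)"
      by (rule sum_mono) auto
    also have "\<dots> = measure (measure_pmf (p e)) U" using U(2) by (simp add: measure_measure_pmf_finite)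
    also have "\<dots> \<le> 1" by (rule measure_pmf.prob_le_1)
    finally show "(\<Sum>v\<in>U. if v \<in> inc e then pmf (p e) v else 0) \<le> 1" .
  qed
  finally have le: "\<alpha> * card U \<le> card EU" by simp
  have "card U > 0" using U by (simp add: card_gt_0_iff)
  then have "\<alpha> \<le> card EU / card U" using le by (simp add: pos_le_divide_eq)
  then show "ereal \<alpha> \<le> ereal (real (card (edges_touching E inc U)) / real (card U))"
    unfolding EU_def by simp
qed

lemma zero_orientable:
  assumes hg: "hypergraph V E inc"
  shows "orientable V E inc 0"
proof -
  define p where "p e = return_pmf (SOME v. v \<in> inc e)" for e
  have "frac_orientation E inc p"
    unfolding frac_orientation_def p_def
  proof
    fix e assume "e \<in> E"
    then have "inc e \<noteq> {}" using hg unfolding hypergraph_def by blast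
    then show "set_pmf (return_pmf (SOME v. v \<in> inc e)) \<subseteq> inc e" by (simp add: some_in_eq)
  qed
  moreover have "\<forall>v\<in>V. indegree E inc p v \<ge> 0" unfolding indegree_def by (simp add: sum_nonneg)
  ultimately show ?thesis unfolding orientable_def by blast
qed

lemma hard_dir:
  fixes a b :: nat
  assumes hg: "hypergraph V E inc" and fd: "finite_degrees V E inc"
    and ab: "a > 0" "b > 0"
    and lt: "ereal (real a / real b) < hall_density V E inc"
  shows "orientable V E inc (real a / real b)"
proof -
  define D where "D v = {e\<in>E. v \<in> inc e}" for v
  define L where "L = V \<times> {..<a}"
  define A where "A x = D (fst x) \<times> {..<b}" for x :: "'a \<times> nat"
  have finD: "finite (D v)" if "v \<in> V" for v using fd that unfolding finite_degrees_def D_def by blast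
  have finA: "\<forall>x\<in>L. finite (A x)" unfolding A_def L_def using finD by auto
  have hallA: "hallc L A" unfolding hallc_def
  proof (intro allI impI)
    fix S assume S: "S \<subseteq> L" "finite S"
    show "card S \<le> card (\<Union>(A ` S))"
    proof (cases "S = {}")
      case True then show ?thesis by simp
    next
      case False
      define U where "U = fst ` S"
      have U: "U \<subseteq> V" "finite U" "U \<noteq> {}" using S False unfolding U_def L_def by auto
      have "S \<subseteq> U \<times> {..<a}" using S(1) unfolding U_def L_def by force
      then have c1: "card S \<le> card U * a" using U(2)
        by (metis card_cartesian_product card_lessThan card_mono finite_SigmaI finite_lessThan)
      have eq: "\<Union>(A ` S) = edges_touching E inc U \<times> {..<b}"
        unfolding A_def U_def edges_touching_def D_def by force
      have "U \<in> {U. U \<subseteq> V \<and> finite U \<and> U \<noteq> {}}" using U by blast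
      then have "hall_density V E inc \<le> ereal (real (card (edges_touching E inc U)) / real (card U))"
        unfolding hall_density_def by (rule INF_lower)
      with lt have "ereal (real a / real b) < ereal (real (card (edges_touching E inc U)) / real (card U))"
        by (rule less_le_trans)
      then have "real a / real b < real (card (edges_touching E inc U)) / real (card U)"
        by simp
      moreover have "card U > 0" using U by (simp add: card_gt_0_iff)
      ultimately have "real a * real (card U) < real (card (edges_touching E inc U)) * real b"
        using ab by (simp add: divide_less_eq less_divide_eq field_simps)
      then have "card U * a \<le> card (edges_touching E inc U) * b"
        by (metis (mono_tags, opaque_lifting) less_imp_le mult.commute of_nat_le_iff of_nat_mult)
      then show ?thesis using c1 eq by (simp add: card_cartesian_product)
    qed
  qed
  obtain f where finj: "inj_on f L" and fA: "\<forall>x\<in>L. f x \<in> A x"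
    using hall_inf[OF finA hallA] by blast
  define P where "P e j v \<longleftrightarrow> (\<exists>i<a. v \<in> V \<and> f (v,i) = (e,j))" for e j v
  define g where "g e j = (if \<exists>v. P e j v then (SOME v. P e j v) else (SOME v. v \<in> inc e))" for e j
  have Puniq: "w = v" if h1: "P e j v" and h2: "P e j w" for e j v w
  proof -
    obtain i where i: "i < a" "v \<in> V" "f (v,i) = (e,j)" using h1 unfolding P_def by blast
    obtain i' where i': "i' < a" "w \<in> V" "f (w,i') = (e,j)" using h2 unfolding P_def by blast
    have "(w,i') = (v,i)" using finj i i' unfolding L_def inj_on_def by auto
    then show ?thesis by simp
  qed
  have gP: "g e j = v" if "P e j v" for e j v
  proof -
    have "P e j (SOME v. P e j v)" using that by (rule someI)
    then show ?thesis unfolding g_def using that Puniq by auto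
  qed
  have ginc: "g e j \<in> inc e" if "e \<in> E" for e j
  proof (cases "\<exists>v. P e j v")
    case True
    then obtain v where v: "P e j v" by blast
    then obtain i where i: "i < a" "v \<in> V" "f (v,i) = (e,j)" unfolding P_def by blast
    then have "(v,i) \<in> L" unfolding L_def by simp
    then have "f (v,i) \<in> A (v,i)" using fA by blast
    then have "v \<in> inc e" using i unfolding A_def D_def by auto
    then show ?thesis using gP[OF v] by simp
  next
    case False
    have "inc e \<noteq> {}" using hg that unfolding hypergraph_def by blast
    have "g e j = (SOME v. v \<in> inc e)" unfolding g_def by (rule if_not_P[OF False])
    then show ?thesis using \<open>inc e \<noteq> {}\<close> by (simp add: some_in_eq)
  qed
  define p where "p e = map_pmf (g e) (pmf_of_set {..<b})" for e
  have Bne: "{..<b} \<noteq> {}" using ab by auto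
  have fo: "frac_orientation E inc p"
    unfolding frac_orientation_def p_def using Bne ginc by auto
  have deg: "indegree E inc p v \<ge> real a / real b" if v: "v \<in> V" for v
  proof -
    define W where "W = Sigma (D v) (\<lambda>e. {j\<in>{..<b}. g e j = v})"
    have pm: "pmf (p e) v = real (card {j\<in>{..<b}. g e j = v}) / real b" for e
    proof -
      have "pmf (p e) v = measure (measure_pmf (pmf_of_set {..<b})) (g e -` {v})"
        unfolding p_def by (rule pmf_map)
      also have "\<dots> = real (card ({..<b} \<inter> g e -` {v})) / real (card {..<b::nat})"
        using Bne by (simp add: measure_pmf_of_set)
      also have "{..<b} \<inter> g e -` {v} = {j\<in>{..<b}. g e j = v}" by auto
      finally show ?thesis by simp
    qed
    have "indegree E inc p v = (\<Sum>e\<in>D v. real (card {j\<in>{..<b}. g e j = v})) / real b"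
      unfolding indegree_def D_def[symmetric] pm by (simp add: sum_divide_distrib)
    also have "(\<Sum>e\<in>D v. real (card {j\<in>{..<b}. g e j = v})) = real (card W)"
      unfolding W_def using finD[OF v] by (simp add: card_SigmaI)
    finally have ind: "indegree E inc p v = real (card W) / real b" .
    have "inj_on (\<lambda>i. f (v,i)) {..<a}"
      using finj v unfolding inj_on_def L_def by auto
    moreover have "(\<lambda>i. f (v,i)) ` {..<a} \<subseteq> W"
    proof
      fix x assume "x \<in> (\<lambda>i. f (v,i)) ` {..<a}"
      then obtain i where i: "i < a" "x = f (v,i)" by blast
      obtain e j where ej: "f (v,i) = (e,j)" by (cases "f (v,i)")
      have "(v,i) \<in> L" using i v unfolding L_def by simp
      then have "f (v,i) \<in> A (v,i)" using fA by blast
      then have "e \<in> D v" "j < b" using ej unfolding A_def by auto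
      moreover have "P e j v" unfolding P_def using i v ej by blast
      ultimately show "x \<in> W" unfolding W_def using gP i ej by auto
    qed
    moreover have "finite W" unfolding W_def using finD[OF v] by auto
    ultimately have "card {..<a} \<le> card W" by (metis card_image card_mono)
    then have "real a \<le> real (card W)" by simp
    then show ?thesis unfolding ind using ab by (simp add: divide_right_mono)
  qed
  show ?thesis unfolding orientable_def using fo deg by blast
qed

theorem propositionB1:
  fixes V :: "'v set" and E :: "'e set" and inc :: "'e \<Rightarrow> 'v set"
  assumes "hypergraph V E inc"
    and "finite_degrees V E inc"
  shows "hall_density V E inc = (SUP \<alpha> \<in> {\<alpha>. orientable V E inc \<alpha>}. ereal \<alpha>)"
proof (rule antisym)
  let ?S = "(SUP \<alpha> \<in> {\<alpha>. orientable V E inc \<alpha>}. ereal \<alpha>)"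
  have up: "ereal \<alpha> \<le> ?S" if "orientable V E inc \<alpha>" for \<alpha>
    by (rule SUP_upper) (use that in simp)
  show "?S \<le> hall_density V E inc"
    by (rule SUP_least) (use easy_dir[OF assms(2)] in simp)
  show "hall_density V E inc \<le> ?S"
  proof (rule dense_le)
    fix y assume y: "y < hall_density V E inc"
    show "y \<le> ?S"
    proof (cases y)
      case (real r)
      show ?thesis
      proof (cases "r \<le> 0")
        case True
        then have "y \<le> ereal 0" using real by simp
        also have "\<dots> \<le> ?S" by (rule up[OF zero_orientable[OF assms(1)]])
        finally show ?thesis .
      next
        case False
        obtain s where s: "ereal r < ereal s" "ereal s < hall_density V E inc"
          using ereal_dense2[OF y[unfolded real]] by blast
        obtain q where q: "q \<in> \<rat>" "r < q" "q < s" using Rats_dense_in_real[of r s] s(1) by auto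
        obtain m n where mn: "n > 0" "q = of_int m / of_int n" using Rats_cases'[OF q(1)] by metis
        have qpos: "q > 0" using False q by simp
        then have "m > 0" using mn by (simp add: zero_less_divide_iff)
        define a where "a = nat m"
        define b where "b = nat n"
        have ab: "a > 0" "b > 0" using \<open>m > 0\<close> mn(1) unfolding a_def b_def by auto
        have qab: "q = real a / real b" using mn \<open>m > 0\<close> unfolding a_def b_def by simp
        have "ereal (real a / real b) < hall_density V E inc"
          using s(2) q(3) unfolding qab[symmetric] by (meson ereal_less_eq(3) less_imp_le order_le_less_trans)
        then have "orientable V E inc (real a / real b)"
          using hard_dir[OF assms ab] by blast
        then have "ereal q \<le> ?S" using up qab by simp
        moreover have "y \<le> ereal q" using real q(2) by simp
        ultimately show ?thesis by (rule order_trans[rotated])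
      qed
    next
      case PInf then show ?thesis using y by simp
    next
      case MInf then show ?thesis by simp
    qed
  qed
qed

end
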